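(* Let $k:\mathbb{R}_+\to\mathbb{R}_+$ be a non-increasing positive function, let $\sigma>0$ and $\delta\in(0,0.5]$. Let $P=\{p_1,\dots,p_N\}\subset\mathbb{R}$ be a univariate data set and let $\Delta=[a,b]$ with $a<b$. Suppose $|P\cap\Delta|\ge 2$, $a\ge\min P$ and $b\le\max P$. Define $\Delta'=[a',b']$ with $a'=(a+\min(P\cap\Delta))/2$ and $b'=(b+\max(P\cap\Delta))/2$, and let $M=\max_{x\in\Delta'}\min_{i=1,\dots,N}|x-p_i|$. Let $L(P)$ be the standard graph Laplacian of the graph on vertices $P$ with similarities $s(P,i,j)=k(|T_\Delta(p_i)-T_\Delta(p_j)|/\sigma)$. Then $$\lambda_2(L(P))\ge \frac{1}{|P|^3}\,k\!\left(\frac{2M+\delta C}{\sigma}\right),$$ where $C=\max\{D,D^{1-\delta}\}$ and $D=\max\{a-\min P,\ \max P-b\}$.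
   Context: For an interval $\Delta=[a,b]$ and $\delta\in(0,0.5]$, $T_\Delta:\mathbb{R}\to\mathbb{R}$ is defined by $T_\Delta(z)=-\delta\big(a-z+(\delta(1-\delta))^{1/\delta}\big)^{1-\delta}+\delta(\delta(1-\delta))^{(1-\delta)/\delta}$ for $z<a$; $T_\Delta(z)=z-a$ for $a\le z\le b$; $T_\Delta(z)=\delta\big(z-b+(\delta(1-\delta))^{1/\delta}\big)^{1-\delta}-\delta(\delta(1-\delta))^{(1-\delta)/\delta}+(b-a)$ for $z>b$. For an affinity matrix $A$ with degree matrix $D=\mathrm{diag}(\sum_jA_{ij})$, the standard Laplacian is $D-A$. $\lambda_2(\cdot)$ is the second smallest eigenvalue; $|P|=N$. *)

theory Defs
  imports "HOL-Analysis.Analysis" "Jordan_Normal_Form.Char_Poly"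
begin

definition T_Delta :: "real \<Rightarrow> real \<Rightarrow> real \<Rightarrow> real \<Rightarrow> real" where
  "T_Delta \<delta> a b z =
    (if z < a then
       - \<delta> * (a - z + (\<delta> * (1 - \<delta>)) powr (1 / \<delta>)) powr (1 - \<delta>)
       + \<delta> * (\<delta> * (1 - \<delta>)) powr ((1 - \<delta>) / \<delta>)
     else if z \<le> b then z - a
     else \<delta> * (z - b + (\<delta> * (1 - \<delta>)) powr (1 / \<delta>)) powr (1 - \<delta>)
       - \<delta> * (\<delta> * (1 - \<delta>)) powr ((1 - \<delta>) / \<delta>) + (b - a))"

definition std_laplacian :: "nat \<Rightarrow> (nat \<Rightarrow> nat \<Rightarrow> real) \<Rightarrow> real mat" where
  "std_laplacian N A =
     mat N N (\<lambda>(i, j). (if i = j then (\<Sum>l<N. A i l) else 0) - A i j)"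

text \<open>Eigenvalues (with algebraic multiplicity) of a real square matrix: the real roots
  of its characteristic polynomial. For symmetric matrices all eigenvalues are real.\<close>
definition real_eigenvalues :: "real mat \<Rightarrow> real multiset" where
  "real_eigenvalues A = proots (char_poly A)"

definition lambda2 :: "real mat \<Rightarrow> real" where
  "lambda2 A = sorted_list_of_multiset (real_eigenvalues A) ! 1"

end

theory Submission
  imports Defs "Jordan_Normal_Form.Spectral_Radius"
begin



definition LM :: "nat \<Rightarrow> (nat\<Rightarrow>nat\<Rightarrow>'a::comm_ring_1) \<Rightarrow> 'a mat" where
  "LM n F = mat n n (\<lambda>(i,j). F i j)"
definition L2 :: "nat \<Rightarrow> (nat\<Rightarrow>nat\<Rightarrow>'a::comm_ring_1) \<Rightarrow> 'a mat" where
  "L2 n F = mat (n-1) (n-1) (\<lambda>(i,j). F (Suc i) (Suc j) - F 0 (Suc j))"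
definition Bm :: "nat \<Rightarrow> 'a::comm_ring_1 mat" where
  "Bm n = mat n n (\<lambda>(i,j). if j=0 then 1 else if i=j then 1 else 0)"
definition Bi :: "nat \<Rightarrow> 'a::comm_ring_1 mat" where
  "Bi n = mat n n (\<lambda>(i,j). (if i=j then 1 else 0) - (if j=0 \<and> i\<noteq>0 then 1 else 0))"

lemma mult_entry: "A \<in> carrier_mat m n \<Longrightarrow> B \<in> carrier_mat n p \<Longrightarrow> i < m \<Longrightarrow> j < p \<Longrightarrow>
  (A * B) $$ (i,j) = (\<Sum>k<n. A$$(i,k) * B$$(k,j))"
  by (simp add: scalar_prod_def atLeast0LessThan)

lemma sum_delta_gen: "finite A \<Longrightarrow> (\<Sum>k\<in>A. (if k = a then f k else 0)) = (if a \<in> A then f a else 0)"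
  by (simp add: sum.delta')

lemma sum_if_delta: "finite A \<Longrightarrow> (\<Sum>k\<in>A. if P k then (if i = k then x else 0) else 0) = (if i \<in> A \<and> P i then x else 0)"
proof -
  assume A: "finite A"
  have "(\<Sum>k\<in>A. if P k then (if i = k then x else 0) else 0) = (\<Sum>k\<in>A. if i = k then (if P i then x else 0) else 0)"
    by (rule sum.cong, auto)
  thus ?thesis using A by (simp add: sum.delta)
qed

lemma mult_if01[simp]: "x * (if P then 1 else 0) = (if P then x else (0::'a::comm_ring_1))"
  "(if P then 1 else 0) * x = (if P then x else (0::'a::comm_ring_1))" by auto

lemma sum_if_delta2: "finite A \<Longrightarrow> (\<Sum>k\<in>A. if P k \<and> i = k then x else 0) = (if i \<in> A \<and> P i then x else 0)"
  by (subst sum_if_delta[symmetric], auto intro: sum.cong)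

lemma sum_if_false0: "(\<Sum>k\<in>A. if 0 < (k::nat) \<and> k = 0 then x else 0) = 0"
  by (rule sum.neutral, auto)

lemma BmBi: "Bm n * Bi n = (1\<^sub>m n :: 'a::comm_ring_1 mat)"
proof (rule eq_matI)
  fix i j assume ij: "i < dim_row (1\<^sub>m n :: 'a mat)" "j < dim_col (1\<^sub>m n :: 'a mat)"
  hence i: "i < n" and j: "j < n" by auto
  have "(Bm n * Bi n :: 'a mat) $$ (i,j) = (\<Sum>k<n. (Bm n :: 'a mat) $$ (i,k) * (Bi n :: 'a mat) $$ (k,j))"
    by (rule mult_entry[of _ n n _ n], auto simp: Bm_def Bi_def i j)
  also have "\<dots> = (\<Sum>k<n. ((if k=0 then 1 else 0) + (if k \<noteq> 0 \<and> i = k then 1 else 0)) *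
      ((if k=j then 1 else 0) - (if j=0 \<and> k\<noteq>0 then 1 else 0)))"
    by (rule sum.cong, auto simp: Bm_def Bi_def i j)
  also have "\<dots> = (1\<^sub>m n :: 'a mat) $$ (i,j)"
    using i j by (auto simp: algebra_simps sum.distrib sum_subtractf if_distrib[of "\<lambda>x. x * _"] sum.delta' sum_if_delta sum_if_delta2 sum_if_false0 cong: if_cong)
  finally show "(Bm n * Bi n :: 'a mat) $$ (i,j) = (1\<^sub>m n :: 'a mat) $$ (i,j)" .
qed (auto simp: Bm_def Bi_def)

lemma BiBm: "Bi n * Bm n = (1\<^sub>m n :: 'a::comm_ring_1 mat)"
proof (rule eq_matI)
  fix i j assume ij: "i < dim_row (1\<^sub>m n :: 'a mat)" "j < dim_col (1\<^sub>m n :: 'a mat)"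
  hence i: "i < n" and j: "j < n" by auto
  have "(Bi n * Bm n :: 'a mat) $$ (i,j) = (\<Sum>k<n. (Bi n :: 'a mat) $$ (i,k) * (Bm n :: 'a mat) $$ (k,j))"
    by (rule mult_entry[of _ n n _ n], auto simp: Bm_def Bi_def i j)
  also have "\<dots> = (\<Sum>k<n. ((if i=k then 1 else 0) - (if k=0 \<and> i\<noteq>0 then 1 else 0)) *
      ((if j=0 then 1 else 0) + (if j \<noteq> 0 \<and> k = j then 1 else 0)))"
    by (rule sum.cong, auto simp: Bm_def Bi_def i j)
  also have "\<dots> = (1\<^sub>m n :: 'a mat) $$ (i,j)"
    using i j by (auto simp: algebra_simps sum.distrib sum_subtractf if_distrib[of "\<lambda>x. x * _"] sum.delta' sum_if_delta cong: if_cong)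
  finally show "(Bi n * Bm n :: 'a mat) $$ (i,j) = (1\<^sub>m n :: 'a mat) $$ (i,j)" .
qed (auto simp: Bm_def Bi_def)

lemma BiLM: "Bi n * LM n F = mat n n (\<lambda>(i,l). F i l - (if i\<noteq>0 then F 0 l else (0::'a::comm_ring_1)))"
proof (rule eq_matI)
  fix i j assume ij: "i < dim_row (mat n n (\<lambda>(i,l). F i l - (if i\<noteq>0 then F 0 l else (0::'a))))"
     "j < dim_col (mat n n (\<lambda>(i,l). F i l - (if i\<noteq>0 then F 0 l else (0::'a))))"
  hence i: "i < n" and j: "j < n" by auto
  have "(Bi n * LM n F :: 'a mat) $$ (i,j) = (\<Sum>k<n. (Bi n :: 'a mat) $$ (i,k) * LM n F $$ (k,j))"
    by (rule mult_entry[of _ n n _ n], auto simp: LM_def Bi_def i j)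
  also have "\<dots> = (\<Sum>k<n. ((if i=k then 1 else 0) - (if k=0 \<and> i\<noteq>0 then 1 else 0)) * F k j)"
    by (rule sum.cong, auto simp: LM_def Bi_def i j)
  also have "\<dots> = F i j - (if i\<noteq>0 then F 0 j else 0)"
    using i j by (auto simp: algebra_simps sum.distrib sum_subtractf if_distrib[of "\<lambda>x. x * _"] sum.delta' sum_if_delta cong: if_cong)
  finally show "(Bi n * LM n F :: 'a mat) $$ (i,j) = mat n n (\<lambda>(i,l). F i l - (if i\<noteq>0 then F 0 l else (0::'a))) $$ (i,j)"
    using i j by simp
qed (auto simp: LM_def Bi_def)

definition Lp :: "nat \<Rightarrow> (nat\<Rightarrow>nat\<Rightarrow>'a::comm_ring_1) \<Rightarrow> 'a mat" where
  "Lp n F = four_block_mat (0\<^sub>m 1 1) (mat 1 (n-1) (\<lambda>(i,j). F 0 (Suc j))) (0\<^sub>m (n-1) 1) (L2 n F)"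

lemma BiLMBm:
  assumes n: "n \<ge> 1" and rs: "\<And>i. i < n \<Longrightarrow> (\<Sum>l<n. F i l) = (0::'a::comm_ring_1)"
  shows "Bi n * LM n F * Bm n = Lp n F"
proof (rule eq_matI)
  fix i j assume ij: "i < dim_row (Lp n F)" "j < dim_col (Lp n F)"
  hence i: "i < n" and j: "j < n" using n by (auto simp: Lp_def L2_def)
  have "(Bi n * LM n F * Bm n :: 'a mat) $$ (i,j) = (\<Sum>l<n. (Bi n * LM n F) $$ (i,l) * (Bm n :: 'a mat) $$ (l,j))"
    by (rule mult_entry[of _ n n _ n], auto simp: LM_def Bi_def Bm_def i j)
  also have "\<dots> = (\<Sum>l<n. (F i l - (if i\<noteq>0 then F 0 l else 0)) * ((if j=0 then 1 else 0) + (if j \<noteq> 0 \<and> l = j then 1 else 0)))"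
    unfolding BiLM by (rule sum.cong, auto simp: Bm_def i j)
  also have "\<dots> = (if j = 0 then (\<Sum>l<n. F i l) - (if i\<noteq>0 then (\<Sum>l<n. F 0 l) else 0) else F i j - (if i\<noteq>0 then F 0 j else 0))"
    using i j by (auto simp: algebra_simps sum.distrib sum_subtractf if_distrib[of "\<lambda>x. x * _"] sum.delta' sum_if_delta cong: if_cong)
  also have "\<dots> = Lp n F $$ (i,j)"
    using i j n rs[OF i] rs[of 0] by (auto simp: Lp_def L2_def)
  finally show "(Bi n * LM n F * Bm n :: 'a mat) $$ (i,j) = Lp n F $$ (i,j)" .
qed (insert n, auto simp: LM_def Bi_def Bm_def Lp_def L2_def)

lemma char_poly_LM:
  assumes n: "n \<ge> 1" and rs: "\<And>i. i < n \<Longrightarrow> (\<Sum>l<n. F i l) = (0::'a::comm_ring_1)"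
  shows "char_poly (LM n F) = [:0,1:] * char_poly (L2 n F)"
proof -
  have c: "LM n F \<in> carrier_mat n n" "Bm n \<in> carrier_mat n n" "(Bi n :: 'a mat) \<in> carrier_mat n n" "Lp n F \<in> carrier_mat n n"
    using n by (auto simp: LM_def Bi_def Bm_def Lp_def L2_def)
  have "LM n F = (Bm n * Bi n) * LM n F * (Bm n * Bi n)"
    using c by (simp add: BmBi)
  also have "\<dots> = Bm n * (Bi n * LM n F * Bm n) * Bi n"
  proof -
    have "(Bm n * Bi n) * LM n F = Bm n * (Bi n * LM n F)" using assoc_mult_mat[OF c(2) c(3) c(1)] .
    moreover have "Bm n * (Bi n * LM n F) * (Bm n * Bi n) = (Bm n * (Bi n * LM n F) * Bm n) * Bi n"
      using c by (subst assoc_mult_mat[of _ n n _ n _ n], auto)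
    moreover have "Bm n * (Bi n * LM n F) * Bm n = Bm n * (Bi n * LM n F * Bm n)"
      using c by (subst assoc_mult_mat[of _ n n _ n _ n], auto)
    ultimately show ?thesis by simp
  qed
  finally have eq: "LM n F = Bm n * Lp n F * Bi n" using BiLMBm[OF n rs] by simp
  have "similar_mat (LM n F) (Lp n F)"
    unfolding similar_mat_def
    by (rule exI[of _ "Bm n"], rule exI[of _ "Bi n"], rule similar_mat_witI[of _ _ n], insert c eq BmBi BiBm, auto)
  hence "char_poly (LM n F) = char_poly (Lp n F)" by (rule char_poly_similar)
  also have "\<dots> = char_poly (0\<^sub>m 1 1 :: 'a mat) * char_poly (L2 n F)"
    unfolding Lp_def by (rule char_poly_four_block_zeros_col, auto simp: L2_def)
  also have "char_poly (0\<^sub>m 1 1 :: 'a mat) = [:0,1:]"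
    by (simp add: char_poly_defs det_def sign_def)
  finally show ?thesis .
qed

lemma eig_w:
  fixes F :: "nat \<Rightarrow> nat \<Rightarrow> 'a::field_char_0"
  assumes n: "n \<ge> 1" and sym: "\<And>i j. i < n \<Longrightarrow> j < n \<Longrightarrow> F i j = F j i"
    and rs: "\<And>i. i < n \<Longrightarrow> (\<Sum>l<n. F i l) = 0"
    and ev: "eigenvector (L2 n F) y \<mu>"
  shows "\<exists>w. (\<forall>i<n. (\<Sum>j<n. F i j * w j) = \<mu> * w i) \<and> (\<Sum>i<n. w i) = 0 \<and> (\<exists>i<n. w i \<noteq> 0)"
proof -
  obtain m where nm: "n = Suc m" using n by (cases n, auto)
  have yc: "y \<in> carrier_vec m" and y0: "y \<noteq> 0\<^sub>v m" and eq: "L2 n F *\<^sub>v y = \<mu> \<cdot>\<^sub>v y"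
    using ev unfolding eigenvector_def by (auto simp: L2_def nm)
  have eqi: "(\<Sum>j<m. (F (Suc i) (Suc j) - F 0 (Suc j)) * y$j) = \<mu> * y$i" if i: "i < m" for i
  proof -
    have "(L2 n F *\<^sub>v y) $ i = (\<mu> \<cdot>\<^sub>v y) $ i" using eq by simp
    thus ?thesis using i yc by (simp add: L2_def nm scalar_prod_def atLeast0LessThan)
  qed
  define z where "z j = (if j = 0 then 0 else y$(j-1))" for j
  define Lz where "Lz i = (\<Sum>j<n. F i j * z j)" for i
  have Lz_shift: "Lz i = (\<Sum>j<m. F i (Suc j) * y$j)" for i
    unfolding Lz_def nm by (subst sum.lessThan_Suc_shift, simp add: z_def)
  define s where "s = Lz 0"
  have Lz_eq: "Lz i = \<mu> * z i + s" if i: "i < n" for i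
  proof (cases i)
    case 0 thus ?thesis by (simp add: s_def z_def)
  next
    case (Suc i')
    hence i': "i' < m" using i nm by auto
    have "Lz i - Lz 0 = (\<Sum>j<m. (F (Suc i') (Suc j) - F 0 (Suc j)) * y$j)"
      unfolding Lz_shift Suc by (simp add: sum_subtractf algebra_simps)
    also have "\<dots> = \<mu> * z i" using eqi[OF i'] by (simp add: z_def Suc)
    finally show ?thesis by (simp add: s_def algebra_simps)
  qed
  have colsum: "(\<Sum>i<n. Lz i) = 0"
  proof -
    have "(\<Sum>i<n. Lz i) = (\<Sum>j<n. (\<Sum>i<n. F i j) * z j)"
      unfolding Lz_def by (subst sum.swap, simp add: sum_distrib_right)
    also have "\<dots> = 0"
    proof (rule sum.neutral, intro ballI)
      fix j assume j: "j \<in> {..<n}"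
      have "(\<Sum>i<n. F i j) = (\<Sum>i<n. F j i)" by (rule sum.cong, insert j, auto simp: sym)
      thus "(\<Sum>i<n. F i j) * z j = 0" using rs j by simp
    qed
    finally show ?thesis .
  qed
  define M where "M = (\<Sum>i<n. z i) / of_nat n"
  have nz: "(of_nat n :: 'a) \<noteq> 0" using n by auto
  have key: "\<mu> * M + s = 0"
  proof -
    have "(\<Sum>i<n. Lz i) = \<mu> * (\<Sum>i<n. z i) + of_nat n * s"
      by (simp add: Lz_eq sum.distrib sum_distrib_left)
    hence "\<mu> * (\<Sum>i<n. z i) + of_nat n * s = 0" using colsum by simp
    hence "(\<mu> * (\<Sum>i<n. z i) + of_nat n * s) / of_nat n = 0" by simp
    thus ?thesis using nz unfolding M_def by (simp add: field_simps)
  qed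
  define w where "w i = z i - M" for i
  show ?thesis
  proof (rule exI[of _ w], intro conjI allI impI)
    fix i assume i: "i < n"
    have "(\<Sum>j<n. F i j * w j) = Lz i - M * (\<Sum>j<n. F i j)"
      unfolding w_def Lz_def by (simp add: algebra_simps sum_subtractf sum_distrib_left)
    also have "\<dots> = \<mu> * z i + s" using rs[OF i] Lz_eq[OF i] by simp
    also have "\<dots> = \<mu> * w i" using key unfolding w_def by (simp add: algebra_simps)
    finally show "(\<Sum>j<n. F i j * w j) = \<mu> * w i" .
  next
    show "(\<Sum>i<n. w i) = 0" unfolding w_def M_def using nz by (simp add: sum_subtractf)
  next
    show "\<exists>i<n. w i \<noteq> 0"
    proof (rule ccontr)
      assume "\<not> (\<exists>i<n. w i \<noteq> 0)"
      hence wz: "\<And>i. i < n \<Longrightarrow> z i = M" unfolding w_def by auto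
      from wz[of 0] have "M = 0" using n by (simp add: z_def)
      hence "\<And>j. j < m \<Longrightarrow> y $ j = 0" using wz[of "Suc _"] nm by (force simp: z_def)
      hence "y = 0\<^sub>v m" using yc by (intro eq_vecI, auto)
      thus False using y0 by simp
    qed
  qed
qed

lemma sorted_second:
  fixes R :: "real multiset"
  assumes R: "R \<noteq> {#}" and Rc: "\<And>x. x \<in># R \<Longrightarrow> c \<le> x"
  shows "c \<le> sorted_list_of_multiset (add_mset 0 R) ! 1"
proof -
  define s where "s = sorted_list_of_multiset (add_mset 0 R)"
  have ms: "mset s = add_mset 0 R" unfolding s_def by (rule mset_sorted_list_of_multiset)
  have so: "sorted s" unfolding s_def by (rule sorted_sorted_list_of_multiset)
  have "length s = size (add_mset 0 R)" using ms by (metis size_mset)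
  hence "length s \<ge> 2" using R by (cases R, auto)
  then obtain a b rest where s: "s = a # b # rest" by (cases s; cases "tl s", auto)
  have ab: "a \<le> b" using so s by auto
  show ?thesis
  proof (rule ccontr)
    assume "\<not> c \<le> sorted_list_of_multiset (add_mset 0 R) ! 1"
    hence bc: "b < c" using s unfolding s_def[symmetric] by simp
    have e: "add_mset a (add_mset b (mset rest)) = add_mset 0 R" using ms s by simp
    have "a \<in># add_mset 0 R" using e[symmetric] by simp
    moreover have "a \<notin># R" using Rc ab bc by force
    ultimately have a0: "a = 0" by auto
    hence "add_mset b (mset rest) = R" using e by simp
    hence "b \<in># R" by auto
    thus False using Rc bc by force
  qed
qed


lemma LA:
  fixes A :: "nat \<Rightarrow> nat \<Rightarrow> real" and c :: real
  assumes n: "n \<ge> 2" and symA: "\<And>i j. i < n \<Longrightarrow> j < n \<Longrightarrow> A i j = A j i"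
    and Q: "\<And>w. (\<Sum>i<n. w i) = 0 \<Longrightarrow>
       c * (\<Sum>i<n. (w i)^2) \<le> (\<Sum>i<n. w i * (\<Sum>j<n. ((if i = j then (\<Sum>l<n. A i l) else 0) - A i j) * w j))"
  shows "c \<le> lambda2 (std_laplacian n A)"
proof -
  define F where "F i j = (if i = j then (\<Sum>l<n. A i l) else 0) - A i j" for i j
  have LF: "std_laplacian n A = LM n F" unfolding std_laplacian_def LM_def F_def by simp
  have n1: "n \<ge> 1" using n by simp
  have symF: "F i j = F j i" if "i < n" "j < n" for i j using symA that unfolding F_def by auto
  have rsF: "(\<Sum>l<n. F i l) = 0" if i: "i < n" for i
    unfolding F_def using i by (simp add: sum_subtractf sum.delta)
  define g where "g = char_poly (L2 n F)"
  have L2c: "L2 n F \<in> carrier_mat (n-1) (n-1)" by (simp add: L2_def)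
  have g0: "g \<noteq> 0" using degree_monic_char_poly[OF L2c] unfolding g_def by auto
  have cp: "char_poly (LM n F) = [:0,1:] * g" unfolding g_def by (rule char_poly_LM[OF n1 rsF])
  have ev: "real_eigenvalues (std_laplacian n A) = add_mset 0 (proots g)"
    unfolding real_eigenvalues_def LF cp using g0
    by (subst proots_mult, auto)
  have rootc: "c \<le> r" if r: "r \<in># proots g" for r
  proof -
    have "poly g r = 0" using r g0 by simp
    hence "eigenvalue (L2 n F) r" unfolding g_def using eigenvalue_root_char_poly[OF L2c] by simp
    then obtain y where "eigenvector (L2 n F) y r" unfolding eigenvalue_def by auto
    from eig_w[OF n1 symF rsF this] obtain w where
      w1: "\<And>i. i<n \<Longrightarrow> (\<Sum>j<n. F i j * w j) = r * w i" and w2: "(\<Sum>i<n. w i) = 0"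
      and w3: "\<exists>i<n. w i \<noteq> 0" by blast
    have "c * (\<Sum>i<n. (w i)^2) \<le> (\<Sum>i<n. w i * (\<Sum>j<n. F i j * w j))"
      using Q[OF w2] unfolding F_def .
    also have "\<dots> = (\<Sum>i<n. r * (w i)^2)"
      by (rule sum.cong, auto simp: w1 power2_eq_square)
    also have "\<dots> = r * (\<Sum>i<n. (w i)^2)" by (simp add: sum_distrib_left)
    finally have le: "c * (\<Sum>i<n. (w i)^2) \<le> r * (\<Sum>i<n. (w i)^2)" .
    from w3 obtain i0 where i0: "i0 < n" "w i0 \<noteq> 0" by auto
    have "0 < (w i0)^2" using i0 by simp
    also have "(w i0)^2 \<le> (\<Sum>i<n. (w i)^2)"
      by (rule member_le_sum, insert i0, auto)
    finally have "0 < (\<Sum>i<n. (w i)^2)" .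
    thus ?thesis using le by (simp add: mult_le_cancel_right)
  qed
  have nonempty: "proots g \<noteq> {#}"
  proof -
    define Fc where "Fc i j = complex_of_real (F i j)" for i j
    have L2Fc: "L2 n Fc = of_real_hom.mat_hom (L2 n F)"
      by (rule eq_matI, auto simp: L2_def Fc_def)
    have L2cc: "L2 n Fc \<in> carrier_mat (n-1) (n-1)" by (simp add: L2_def)
    have "spectrum (L2 n Fc) \<noteq> {}" by (rule spectrum_non_empty[OF L2cc], insert n, auto)
    then obtain \<mu> where "eigenvalue (L2 n Fc) \<mu>" unfolding spectrum_def by auto
    then obtain y where y: "eigenvector (L2 n Fc) y \<mu>" unfolding eigenvalue_def by auto
    have symFc: "Fc i j = Fc j i" if "i < n" "j < n" for i j using symF[OF that] unfolding Fc_def by simp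
    have rsFc: "(\<Sum>l<n. Fc i l) = 0" if i: "i < n" for i
      unfolding Fc_def using rsF[OF i] by (simp flip: of_real_sum)
    from eig_w[OF n1 symFc rsFc y] obtain w where
      w1: "\<And>i. i<n \<Longrightarrow> (\<Sum>j<n. Fc i j * w j) = \<mu> * w i"
      and w3: "\<exists>i<n. w i \<noteq> 0" by blast
    define S where "S = (\<Sum>i<n. cnj (w i) * (\<Sum>j<n. Fc i j * w j))"
    define NN where "NN = (\<Sum>i<n. cnj (w i) * w i)"
    have "S = (\<Sum>i<n. \<mu> * (cnj (w i) * w i))" unfolding S_def
      by (rule sum.cong, auto simp: w1)
    hence SN: "S = \<mu> * NN" unfolding NN_def by (simp add: sum_distrib_left)
    have "cnj S = (\<Sum>i<n. w i * (\<Sum>j<n. Fc i j * cnj (w j)))"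
      unfolding S_def by (simp add: Fc_def)
    also have "\<dots> = (\<Sum>i<n. (\<Sum>j<n. w i * Fc i j * cnj (w j)))"
      by (simp add: sum_distrib_left algebra_simps)
    also have "\<dots> = (\<Sum>j<n. (\<Sum>i<n. w i * Fc i j * cnj (w j)))"
      by (rule sum.swap)
    also have "\<dots> = (\<Sum>j<n. cnj (w j) * (\<Sum>i<n. Fc j i * w i))"
      by (rule sum.cong[OF refl], simp add: sum_distrib_left, rule sum.cong, auto simp: symFc algebra_simps)
    also have "\<dots> = S" unfolding S_def ..
    finally have cS: "cnj S = S" .
    hence imS: "Im S = 0" by (metis complex_cnj_cancel_iff complex_cnj_complex_of_real Reals_cnj_iff Reals_def complex_is_Real_iff)
    have NNr: "NN = of_real (\<Sum>i<n. (cmod (w i))^2)"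
    proof -
      have "NN = (\<Sum>i<n. complex_of_real ((cmod (w i))^2))" unfolding NN_def
        by (rule sum.cong[OF refl], subst complex_norm_square, simp add: mult.commute)
      thus ?thesis by (simp only: of_real_sum)
    qed
    from w3 obtain i0 where i0: "i0 < n" "w i0 \<noteq> 0" by auto
    have "0 < (cmod (w i0))^2" using i0 by simp
    also have "(cmod (w i0))^2 \<le> (\<Sum>i<n. (cmod (w i))^2)"
      by (rule member_le_sum, insert i0, auto)
    finally have Npos: "0 < (\<Sum>i<n. (cmod (w i))^2)" .
    have NN0: "NN \<noteq> 0" using Npos unfolding NNr by (metis of_real_eq_0_iff less_irrefl)
    have "\<mu> = S / NN" using SN NN0 by simp
    hence "Im \<mu> = 0" using imS NNr by (simp add: Im_divide_of_real)
    hence mu: "\<mu> = of_real (Re \<mu>)" by (simp add: complex_eq_iff)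
    have "poly (char_poly (L2 n Fc)) \<mu> = 0"
      using eigenvalue_root_char_poly[OF L2cc] \<open>eigenvalue (L2 n Fc) \<mu>\<close> by simp
    hence "poly (map_poly of_real g) (of_real (Re \<mu>)) = (0::complex)"
      unfolding L2Fc g_def of_real_hom.char_poly_hom[OF L2c] using mu by simp
    hence "poly g (Re \<mu>) = 0" unfolding of_real_hom.poly_map_poly by simp
    hence "Re \<mu> \<in># proots g" using g0 by simp
    thus ?thesis by auto
  qed
  show ?thesis unfolding lambda2_def ev by (rule sorted_second[OF nonempty rootc])
qed



lemma sort_perm:
  fixes p :: "nat \<Rightarrow> real"
  assumes inj: "inj_on p {..<n}"
  shows "\<exists>\<pi>. bij_betw \<pi> {..<n} {..<n} \<and> (\<forall>q r. q < r \<longrightarrow> r < n \<longrightarrow> p (\<pi> q) < p (\<pi> r))"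
proof -
  define ps where "ps = sorted_list_of_set (p ` {..<n})"
  have fin: "finite (p ` {..<n})" by simp
  have len: "length ps = n" unfolding ps_def using inj by (simp add: card_image)
  have st: "sorted_wrt (<) ps" unfolding ps_def by (rule strict_sorted_list_of_set)
  have setps: "set ps = p ` {..<n}" unfolding ps_def using fin by simp
  define \<pi> where "\<pi> q = inv_into {..<n} p (ps ! q)" for q
  have pin: "\<pi> q < n \<and> p (\<pi> q) = ps ! q" if q: "q < n" for q
  proof -
    have "ps ! q \<in> p ` {..<n}" using q len setps nth_mem by metis
    hence "inv_into {..<n} p (ps ! q) \<in> {..<n}" by (rule inv_into_into)
    moreover have "p (inv_into {..<n} p (ps ! q)) = ps ! q" using \<open>ps ! q \<in> p ` {..<n}\<close> by (rule f_inv_into_f)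
    ultimately show ?thesis unfolding \<pi>_def by auto
  qed
  have mono: "p (\<pi> q) < p (\<pi> r)" if "q < r" "r < n" for q r
    using pin[of q] pin[of r] that sorted_wrt_nth_less[OF st, of q r] len by auto
  have injpi: "inj_on \<pi> {..<n}"
  proof (rule inj_onI)
    fix q r assume q: "q \<in> {..<n}" and r: "r \<in> {..<n}" and e: "\<pi> q = \<pi> r"
    show "q = r"
    proof (rule ccontr)
      assume "q \<noteq> r"
      hence "q < r \<or> r < q" by auto
      thus False using mono[of q r] mono[of r q] q r e by auto
    qed
  qed
  have "bij_betw \<pi> {..<n} {..<n}"
    by (rule bij_betw_imageI[OF injpi], rule endo_inj_surj[OF _ _ injpi], insert pin, auto)
  thus ?thesis using mono by blast
qed

lemma pair_bound:
  fixes g :: "nat \<Rightarrow> nat \<Rightarrow> real"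
  assumes nn: "\<And>q r. q < n \<Longrightarrow> r < n \<Longrightarrow> 0 \<le> g q r"
    and sym: "\<And>q r. q < n \<Longrightarrow> r < n \<Longrightarrow> g q r = g r q"
  shows "2 * (\<Sum>t<n-1. g t (Suc t)) \<le> (\<Sum>q<n. \<Sum>r<n. g q r)"
proof -
  define E1 where "E1 = (\<lambda>t. (t, Suc t)) ` {..<n-1}"
  define E2 where "E2 = (\<lambda>t. (Suc t, t)) ` {..<n-1}"
  have s1: "(\<Sum>x\<in>E1. case_prod g x) = (\<Sum>t<n-1. g t (Suc t))"
    unfolding E1_def by (subst sum.reindex, auto simp: inj_on_def)
  have s2: "(\<Sum>x\<in>E2. case_prod g x) = (\<Sum>t<n-1. g t (Suc t))"
    unfolding E2_def by (subst sum.reindex, auto simp: inj_on_def intro!: sum.cong sym)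
  have disj: "E1 \<inter> E2 = {}" unfolding E1_def E2_def by auto
  have sub: "E1 \<union> E2 \<subseteq> {..<n} \<times> {..<n}" unfolding E1_def E2_def by auto
  have "2 * (\<Sum>t<n-1. g t (Suc t)) = (\<Sum>x\<in>E1 \<union> E2. case_prod g x)"
    using s1 s2 disj by (subst sum.union_disjoint, auto simp: E1_def E2_def)
  also have "\<dots> \<le> (\<Sum>x\<in>{..<n} \<times> {..<n}. case_prod g x)"
    by (rule sum_mono2[OF _ sub], auto intro: nn)
  also have "\<dots> = (\<Sum>q<n. \<Sum>r<n. g q r)" by (simp add: sum.cartesian_product)
  finally show ?thesis .
qed

lemma telescope_bound:
  fixes f :: "nat \<Rightarrow> real"
  assumes q: "q < n" and r: "r < n"
  shows "\<bar>f q - f r\<bar> \<le> (\<Sum>t<n-1. \<bar>f (Suc t) - f t\<bar>)"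
proof -
  have gen: "\<bar>f b - f a\<bar> \<le> (\<Sum>t<n-1. \<bar>f (Suc t) - f t\<bar>)" if ab: "a \<le> b" "b < n" for a b
  proof -
    have "\<bar>f b - f a\<bar> = \<bar>\<Sum>t = a..<b. f (Suc t) - f t\<bar>" using sum_Suc_diff'[OF ab(1), of f] by simp
    also have "\<dots> \<le> (\<Sum>t = a..<b. \<bar>f (Suc t) - f t\<bar>)" by (rule sum_abs)
    also have "\<dots> \<le> (\<Sum>t<n-1. \<bar>f (Suc t) - f t\<bar>)"
      by (rule sum_mono2, insert ab, auto)
    finally show ?thesis .
  qed
  show ?thesis
  proof (cases "r \<le> q")
    case True thus ?thesis using gen[OF True q] by simp
  next
    case False thus ?thesis using gen[of q r] r by (simp add: abs_minus_commute)
  qed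
qed

lemma P4:
  fixes f :: "nat \<Rightarrow> real"
  assumes s0: "(\<Sum>q<n. f q) = 0"
  shows "(\<Sum>q<n. (f q)^2) \<le> real n ^ 3 * (\<Sum>t<n-1. (f (Suc t) - f t)^2)"
proof -
  define D where "D = (\<Sum>t<n-1. (f (Suc t) - f t)^2)"
  have D0: "0 \<le> D" unfolding D_def by (rule sum_nonneg, auto)
  have dt: "\<bar>f (Suc t) - f t\<bar> \<le> sqrt D" if t: "t < n-1" for t
  proof -
    have "(f (Suc t) - f t)^2 \<le> D" unfolding D_def by (rule member_le_sum, insert t, auto)
    thus ?thesis by (metis real_sqrt_abs real_sqrt_le_mono)
  qed
  have pair: "(f q - f r)^2 \<le> real n ^ 2 * D" if q: "q < n" and r: "r < n" for q r
  proof -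
    have "\<bar>f q - f r\<bar> \<le> (\<Sum>t<n-1. \<bar>f (Suc t) - f t\<bar>)" by (rule telescope_bound[OF q r])
    also have "\<dots> \<le> (\<Sum>t<n-1. sqrt D)" by (rule sum_mono, insert dt, auto)
    also have "\<dots> = real (n-1) * sqrt D" by simp
    also have "\<dots> \<le> real n * sqrt D" by (rule mult_right_mono, insert D0, auto)
    finally have "\<bar>f q - f r\<bar> \<le> real n * sqrt D" .
    hence "\<bar>f q - f r\<bar>^2 \<le> (real n * sqrt D)^2" by (rule power_mono, simp)
    thus ?thesis using D0 by (simp add: power_mult_distrib)
  qed
  have ident: "(\<Sum>q<n. \<Sum>r<n. (f q - f r)^2) = 2 * real n * (\<Sum>q<n. (f q)^2)"
  proof -
    have "(\<Sum>q<n. \<Sum>r<n. (f q - f r)^2) = (\<Sum>q<n. \<Sum>r<n. (f q)^2 + (f r)^2 - 2 * f q * f r)"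
      by (simp add: power2_diff)
    also have "\<dots> = (\<Sum>q<n. real n * (f q)^2 + (\<Sum>r<n. (f r)^2) - 2 * f q * (\<Sum>r<n. f r))"
      by (simp add: sum.distrib sum_subtractf sum_distrib_left)
    also have "\<dots> = 2 * real n * (\<Sum>q<n. (f q)^2)"
      using s0 by (simp add: sum.distrib sum_distrib_left algebra_simps)
    finally show ?thesis .
  qed
  have "2 * real n * (\<Sum>q<n. (f q)^2) \<le> (\<Sum>q<n. \<Sum>r<n. real n ^ 2 * D)"
    unfolding ident[symmetric] by (rule sum_mono, rule sum_mono, rule pair, auto)
  also have "\<dots> = real n * real n * real n ^ 2 * D" by simp
  finally have le: "2 * real n * (\<Sum>q<n. (f q)^2) \<le> real n * real n * real n ^ 2 * D" .
  show ?thesis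
  proof (cases "n = 0")
    case True thus ?thesis by simp
  next
    case False
    hence "2 * (\<Sum>q<n. (f q)^2) \<le> real n * real n ^ 2 * D" using le
      by (simp add: mult.assoc mult_le_cancel_left_pos)
    moreover have "real n * real n ^ 2 = real n ^ 3" by (simp add: power3_eq_cube power2_eq_square)
    ultimately have "2 * (\<Sum>q<n. (f q)^2) \<le> real n ^ 3 * D" by simp
    moreover have "0 \<le> (\<Sum>q<n. (f q)^2)" by (rule sum_nonneg, auto)
    moreover have "0 \<le> real n ^ 3 * D" using D0 by simp
    ultimately show ?thesis unfolding D_def by linarith
  qed
qed

lemma QF_ident:
  fixes A :: "nat \<Rightarrow> nat \<Rightarrow> real"
  assumes symA: "\<And>i j. i < n \<Longrightarrow> j < n \<Longrightarrow> A i j = A j i"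
  shows "(\<Sum>i<n. w i * (\<Sum>j<n. ((if i = j then (\<Sum>l<n. A i l) else 0) - A i j) * w j))
     = (\<Sum>i<n. \<Sum>j<n. A i j * (w i - w j)^2) / 2"
proof -
  define S1 where "S1 = (\<Sum>i<n. \<Sum>j<n. A i j * (w i)^2)"
  define S2 where "S2 = (\<Sum>i<n. \<Sum>j<n. A i j * (w i * w j))"
  have "(\<Sum>i<n. w i * (\<Sum>j<n. ((if i = j then (\<Sum>l<n. A i l) else 0) - A i j) * w j))
      = (\<Sum>i<n. w i * ((\<Sum>l<n. A i l) * w i - (\<Sum>j<n. A i j * w j)))"
  proof (rule sum.cong[OF refl])
    fix i assume i: "i \<in> {..<n}"
    have "(\<Sum>j<n. ((if i = j then (\<Sum>l<n. A i l) else 0) - A i j) * w j)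
       = (\<Sum>j<n. (if i = j then (\<Sum>l<n. A i l) * w j else 0)) - (\<Sum>j<n. A i j * w j)"
      by (simp add: left_diff_distrib sum_subtractf if_distrib[of "\<lambda>x. x * _"] cong: if_cong)
    also have "\<dots> = (\<Sum>l<n. A i l) * w i - (\<Sum>j<n. A i j * w j)" using i by (simp add: sum.delta)
    finally show "w i * (\<Sum>j<n. ((if i = j then (\<Sum>l<n. A i l) else 0) - A i j) * w j) = w i * ((\<Sum>l<n. A i l) * w i - (\<Sum>j<n. A i j * w j))" by simp
  qed
  also have "\<dots> = S1 - S2" unfolding S1_def S2_def
    by (simp add: algebra_simps sum_subtractf sum_distrib_left sum_distrib_right power2_eq_square)
  finally have l: "(\<Sum>i<n. w i * (\<Sum>j<n. ((if i = j then (\<Sum>l<n. A i l) else 0) - A i j) * w j)) = S1 - S2" .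
  have sw: "(\<Sum>i<n. \<Sum>j<n. A i j * (w j)^2) = S1"
    unfolding S1_def by (subst sum.swap, rule sum.cong, auto intro!: sum.cong simp: symA)
  have "(\<Sum>i<n. \<Sum>j<n. A i j * (w i - w j)^2) = (\<Sum>i<n. \<Sum>j<n. A i j * (w i)^2 + A i j * (w j)^2 - 2 * (A i j * (w i * w j)))"
    by (rule sum.cong, auto intro!: sum.cong simp: power2_diff algebra_simps)
  also have "\<dots> = S1 + S1 - 2 * S2" unfolding S2_def using sw
    by (simp add: sum.distrib sum_subtractf sum_distrib_left S1_def)
  finally show ?thesis using l by simp
qed

lemma PATH:
  fixes A :: "nat \<Rightarrow> nat \<Rightarrow> real" and p :: "nat \<Rightarrow> real" and K :: real
  assumes n: "n \<ge> 1"
    and symA: "\<And>i j. i < n \<Longrightarrow> j < n \<Longrightarrow> A i j = A j i"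
    and nnA: "\<And>i j. i < n \<Longrightarrow> j < n \<Longrightarrow> 0 \<le> A i j"
    and pinj: "inj_on p {..<n}" and K0: "0 \<le> K"
    and adj: "\<And>i j. i < n \<Longrightarrow> j < n \<Longrightarrow> p i < p j \<Longrightarrow> (\<forall>l<n. \<not> (p i < p l \<and> p l < p j)) \<Longrightarrow> K \<le> A i j"
    and s0: "(\<Sum>i<n. w i) = 0"
  shows "K / real n ^ 3 * (\<Sum>i<n. (w i)^2) \<le>
     (\<Sum>i<n. w i * (\<Sum>j<n. ((if i = j then (\<Sum>l<n. A i l) else 0) - A i j) * w j))"
proof -
  obtain \<pi> where bij: "bij_betw \<pi> {..<n} {..<n}"
    and mono: "\<And>q r. q < r \<Longrightarrow> r < n \<Longrightarrow> p (\<pi> q) < p (\<pi> r)"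
    using sort_perm[OF pinj] by blast
  have pin: "\<pi> q < n" if "q < n" for q using bij that by (auto dest: bij_betwE)
  define f where "f q = w (\<pi> q)" for q
  define g where "g q r = A (\<pi> q) (\<pi> r) * (f q - f r)^2" for q r
  have reidx: "(\<Sum>q<n. h (\<pi> q)) = (\<Sum>i<n. h i)" for h :: "nat \<Rightarrow> real"
    by (rule sum.reindex_bij_betw[OF bij])
  have QF: "(\<Sum>i<n. w i * (\<Sum>j<n. ((if i = j then (\<Sum>l<n. A i l) else 0) - A i j) * w j))
     = (\<Sum>q<n. \<Sum>r<n. g q r) / 2"
  proof -
    have "(\<Sum>i<n. \<Sum>j<n. A i j * (w i - w j)^2) = (\<Sum>q<n. \<Sum>r<n. g q r)"
    proof -
      have "(\<Sum>q<n. \<Sum>r<n. g q r) = (\<Sum>q<n. \<Sum>j<n. A (\<pi> q) j * (w (\<pi> q) - w j)^2)"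
        unfolding g_def f_def by (rule sum.cong[OF refl], rule reidx)
      also have "\<dots> = (\<Sum>i<n. \<Sum>j<n. A i j * (w i - w j)^2)"
        by (rule reidx)
      finally show ?thesis by simp
    qed
    thus ?thesis using QF_ident[OF symA] by simp
  qed
  have "2 * (\<Sum>t<n-1. g t (Suc t)) \<le> (\<Sum>q<n. \<Sum>r<n. g q r)"
    by (rule pair_bound, auto simp: g_def pin nnA symA power2_commute)
  hence pb: "(\<Sum>t<n-1. g t (Suc t)) \<le> (\<Sum>i<n. w i * (\<Sum>j<n. ((if i = j then (\<Sum>l<n. A i l) else 0) - A i j) * w j))"
    unfolding QF by simp
  have gK: "K * (f (Suc t) - f t)^2 \<le> g t (Suc t)" if t: "t < n - 1" for t
  proof -
    have t1: "Suc t < n" using t by simp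
    have "K \<le> A (\<pi> t) (\<pi> (Suc t))"
    proof (rule adj[OF pin pin mono])
      show "\<forall>l<n. \<not> (p (\<pi> t) < p l \<and> p l < p (\<pi> (Suc t)))"
      proof (intro allI impI notI)
        fix l assume l: "l < n" and lt: "p (\<pi> t) < p l \<and> p l < p (\<pi> (Suc t))"
        have "l \<in> \<pi> ` {..<n}" using bij l by (simp add: bij_betw_def)
        then obtain u where u: "u < n" "l = \<pi> u" by auto
        have "t < u"
        proof (rule ccontr)
          assume "\<not> t < u" hence "u < t \<or> u = t" by auto
          thus False using mono[of u t] lt u t1 by auto
        qed
        moreover have "u < Suc t"
        proof (rule ccontr)
          assume "\<not> u < Suc t" hence "Suc t < u \<or> u = Suc t" by auto
          thus False using mono[of "Suc t" u] lt u by auto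
        qed
        ultimately show False by simp
      qed
    qed (use t1 in auto)
    hence "K * (f (Suc t) - f t)^2 \<le> A (\<pi> t) (\<pi> (Suc t)) * (f (Suc t) - f t)^2"
      by (rule mult_right_mono, simp)
    thus ?thesis unfolding g_def by (simp add: power2_commute)
  qed
  define D where "D = (\<Sum>t<n-1. (f (Suc t) - f t)^2)"
  have sf: "(\<Sum>q<n. f q) = 0" unfolding f_def using s0 by (simp add: reidx)
  have p4: "(\<Sum>q<n. (f q)^2) \<le> real n ^ 3 * D" unfolding D_def by (rule P4[OF sf])
  have sq: "(\<Sum>q<n. (f q)^2) = (\<Sum>i<n. (w i)^2)" unfolding f_def by (rule reidx[of "\<lambda>i. (w i)^2"])
  have n3: "real n ^ 3 > 0" using n by simp
  have "K / real n ^ 3 * (\<Sum>i<n. (w i)^2) \<le> K / real n ^ 3 * (real n ^ 3 * D)"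
    using p4 sq K0 n3 by (intro mult_left_mono, auto)
  also have "\<dots> = K * D" using n3 by simp
  also have "\<dots> = (\<Sum>t<n-1. K * (f (Suc t) - f t)^2)" unfolding D_def by (simp add: sum_distrib_left)
  also have "\<dots> \<le> (\<Sum>t<n-1. g t (Suc t))" by (rule sum_mono, rule gK, simp)
  also have "\<dots> \<le> (\<Sum>i<n. w i * (\<Sum>j<n. ((if i = j then (\<Sum>l<n. A i l) else 0) - A i j) * w j))" by (rule pb)
  finally show ?thesis .
qed

lemma powr_subadd:
  fixes x y q :: real
  assumes x: "0 \<le> x" and y: "0 \<le> y" and q: "0 < q" "q \<le> 1"
  shows "(x + y) powr q \<le> x powr q + y powr q"
proof (cases "x = 0 \<or> y = 0")
  case True thus ?thesis using q by auto
next
  case False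
  hence xp: "0 < x" and yp: "0 < y" using x y by auto
  have s: "0 < x + y" using xp yp by simp
  have "(x + y) powr q = (x + y) powr (q - 1) * (x + y)"
    using s powr_add[of "x+y" "q-1" 1] by simp
  also have "\<dots> = x * (x + y) powr (q - 1) + y * (x + y) powr (q - 1)" by (simp add: algebra_simps)
  also have "\<dots> \<le> x * x powr (q - 1) + y * y powr (q - 1)"
    using powr_mono2'[of "q-1" x "x+y"] powr_mono2'[of "q-1" y "x+y"] q xp yp
    by (intro add_mono mult_left_mono, auto)
  also have "\<dots> = x powr q + y powr q"
    using xp yp powr_add[of x "q-1" 1] powr_add[of y "q-1" 1] by (simp add: mult.commute)
  finally show ?thesis .
qed

lemma gap_bound:
  fixes z c q :: real
  assumes z: "0 \<le> z" and c: "0 < c" and q: "0 < q" "q \<le> 1"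
  shows "0 \<le> (z + c) powr q - c powr q" "(z + c) powr q - c powr q \<le> z powr q"
  using powr_mono2[of q c "z+c"] powr_subadd[of z c q] assms by auto

lemma T_left:
  fixes \<delta> a b z D :: real
  assumes d: "0 < \<delta>" "\<delta> \<le> 1/2" and z: "z < a" "a - z \<le> D"
  shows "- (\<delta> * D powr (1 - \<delta>)) \<le> T_Delta \<delta> a b z" "T_Delta \<delta> a b z \<le> 0"
proof -
  define c where "c = (\<delta> * (1 - \<delta>)) powr (1 / \<delta>)"
  have c0: "0 < c" unfolding c_def using d by simp
  have cq: "c powr (1 - \<delta>) = (\<delta> * (1 - \<delta>)) powr ((1 - \<delta>) / \<delta>)"
    unfolding c_def by (simp add: powr_powr)
  have T: "T_Delta \<delta> a b z = - \<delta> * ((a - z + c) powr (1 - \<delta>) - c powr (1 - \<delta>))"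
    unfolding T_Delta_def c_def[symmetric] cq[symmetric] using z by (simp add: algebra_simps)
  have q: "0 < 1 - \<delta>" "1 - \<delta> \<le> 1" using d by auto
  note g = gap_bound[of "a - z" c "1 - \<delta>", OF _ c0 q]
  have "(a - z) powr (1 - \<delta>) \<le> D powr (1 - \<delta>)" by (rule powr_mono2, insert q z, auto)
  hence "(a - z + c) powr (1 - \<delta>) - c powr (1 - \<delta>) \<le> D powr (1 - \<delta>)" using g z by linarith
  thus "- (\<delta> * D powr (1 - \<delta>)) \<le> T_Delta \<delta> a b z" unfolding T using d by (simp add: mult_left_mono)
  show "T_Delta \<delta> a b z \<le> 0" unfolding T using g z d by (simp add: mult_nonneg_nonneg)
qed

lemma T_right:
  fixes \<delta> a b z D :: real
  assumes d: "0 < \<delta>" "\<delta> \<le> 1/2" and z: "b < z" "z - b \<le> D" and ab: "a < b"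
  shows "T_Delta \<delta> a b z \<le> (b - a) + \<delta> * D powr (1 - \<delta>)" "b - a \<le> T_Delta \<delta> a b z"
proof -
  define c where "c = (\<delta> * (1 - \<delta>)) powr (1 / \<delta>)"
  have c0: "0 < c" unfolding c_def using d by simp
  have cq: "c powr (1 - \<delta>) = (\<delta> * (1 - \<delta>)) powr ((1 - \<delta>) / \<delta>)"
    unfolding c_def by (simp add: powr_powr)
  have T: "T_Delta \<delta> a b z = \<delta> * ((z - b + c) powr (1 - \<delta>) - c powr (1 - \<delta>)) + (b - a)"
    unfolding T_Delta_def c_def[symmetric] cq[symmetric] using z ab by (simp add: algebra_simps)
  have q: "0 < 1 - \<delta>" "1 - \<delta> \<le> 1" using d by auto
  note g = gap_bound[of "z - b" c "1 - \<delta>", OF _ c0 q]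
  have "(z - b) powr (1 - \<delta>) \<le> D powr (1 - \<delta>)" by (rule powr_mono2, insert q z, auto)
  hence "(z - b + c) powr (1 - \<delta>) - c powr (1 - \<delta>) \<le> D powr (1 - \<delta>)" using g z by linarith
  thus "T_Delta \<delta> a b z \<le> (b - a) + \<delta> * D powr (1 - \<delta>)" unfolding T using d by (simp add: mult_left_mono)
  show "b - a \<le> T_Delta \<delta> a b z" unfolding T using g z d by (simp add: mult_nonneg_nonneg)
qed

lemma T_mid: "a \<le> z \<Longrightarrow> z \<le> b \<Longrightarrow> T_Delta \<delta> a b z = z - a"
  unfolding T_Delta_def by simp


theorem lemma2:
  fixes k :: "real \<Rightarrow> real" and \<sigma> \<delta> a b :: real and N :: nat and p :: "nat \<Rightarrow> real"
  assumes k_pos: "\<forall>x\<ge>0. k x > 0"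
    and k_noninc: "\<forall>x y. 0 \<le> x \<longrightarrow> x \<le> y \<longrightarrow> k y \<le> k x"
    and \<sigma>_pos: "\<sigma> > 0"
    and \<delta>_range: "0 < \<delta>" "\<delta> \<le> 1/2"
    and p_inj: "inj_on p {..<N}"
    and ab: "a < b"
    and two_in: "card {i. i < N \<and> a \<le> p i \<and> p i \<le> b} \<ge> 2"
    and a_ge: "a \<ge> Min (p ` {..<N})"
    and b_le: "b \<le> Max (p ` {..<N})"
  shows
    "let P = p ` {..<N};
         PD = P \<inter> {a..b};
         a' = (a + Min PD) / 2;
         b' = (b + Max PD) / 2;
         M = (SUP x\<in>{a'..b'}. Min ((\<lambda>i. \<bar>x - p i\<bar>) ` {..<N}));
         D = max (a - Min P) (Max P - b);
         C = max D (D powr (1 - \<delta>));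
         L = std_laplacian N (\<lambda>i j. k (\<bar>T_Delta \<delta> a b (p i) - T_Delta \<delta> a b (p j)\<bar> / \<sigma>))
     in lambda2 L \<ge> 1 / (real (card P))^3 * k ((2 * M + \<delta> * C) / \<sigma>)"
proof -
  define P where "P = p ` {..<N}"
  define PD where "PD = P \<inter> {a..b}"
  define m0 where "m0 = Min PD"
  define m1 where "m1 = Max PD"
  define a' where "a' = (a + m0) / 2"
  define b' where "b' = (b + m1) / 2"
  define F where "F x = Min ((\<lambda>i. \<bar>x - p i\<bar>) ` {..<N})" for x
  define M where "M = (SUP x\<in>{a'..b'}. F x)"
  define D where "D = max (a - Min P) (Max P - b)"
  define C where "C = max D (D powr (1 - \<delta>))"
  define t where "t i = T_Delta \<delta> a b (p i)" for i
  define A where "A i j = k (\<bar>t i - t j\<bar> / \<sigma>)" for i j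
  define K where "K = k ((2 * M + \<delta> * C) / \<sigma>)"
  define e where "e = \<delta> * D powr (1 - \<delta>)"
  define I where "I = {i. i < N \<and> a \<le> p i \<and> p i \<le> b}"
  have IN: "I \<subseteq> {..<N}" unfolding I_def by auto
  have cI: "card I \<ge> 2" using two_in unfolding I_def .
  have N2: "N \<ge> 2" using card_mono[OF _ IN] cI by simp
  have NE: "{..<N} \<noteq> {}" using N2 by (simp add: lessThan_empty_iff)
  have finP: "finite P" unfolding P_def by auto
  have P0: "P \<noteq> {}" unfolding P_def using N2 by (simp add: lessThan_empty_iff)
  have cardP: "card P = N" unfolding P_def using p_inj by (simp add: card_image)
  obtain i1 where i1: "i1 \<in> I" using cI by (metis card.empty ex_in_conv not_numeral_le_zero)
  have finPD: "finite PD" unfolding PD_def using finP by simp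
  have i1PD: "p i1 \<in> PD" using i1 unfolding PD_def P_def I_def by auto
  hence PD0: "PD \<noteq> {}" by auto
  have m0PD: "m0 \<in> PD" and m1PD: "m1 \<in> PD" unfolding m0_def m1_def using finPD PD0 by auto
  have m0le: "m0 \<le> x" and m1ge: "x \<le> m1" if "x \<in> PD" for x
    unfolding m0_def m1_def using finPD that by auto
  have am0: "a \<le> m0" and m1b: "m1 \<le> b" using m0PD m1PD unfolding PD_def by auto
  have m01: "m0 \<le> m1" using m0le[OF m1PD] .
  have a'b': "a' \<le> b'" unfolding a'_def b'_def using am0 m1b m01 by simp
  have a'm0: "a' \<le> m0" and m1b': "m1 \<le> b'" unfolding a'_def b'_def using am0 m1b by auto
  obtain l0 where l0: "m0 = p l0" "l0 < N" using m0PD unfolding PD_def P_def by auto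
  obtain l1 where l1: "m1 = p l1" "l1 < N" using m1PD unfolding PD_def P_def by auto
  have inPD: "p i \<in> PD" if "i < N" "a \<le> p i" "p i \<le> b" for i
    using that unfolding PD_def P_def by auto
  have Fle: "F x \<le> \<bar>x - p 0\<bar>" for x unfolding F_def using N2 NE by (intro Min_le, auto)
  have Fge: "d \<le> F x" if "\<And>i. i < N \<Longrightarrow> d \<le> \<bar>x - p i\<bar>" for d x
    unfolding F_def using N2 NE that by (subst Min_ge_iff, auto)
  have F0: "0 \<le> F x" for x by (rule Fge, simp)
  have bdd: "bdd_above (F ` {a'..b'})"
    by (rule bdd_aboveI2[of _ _ "\<bar>a'\<bar> + \<bar>b'\<bar> + \<bar>p 0\<bar>"], rule order.trans[OF Fle], auto)
  have FM: "F x \<le> M" if "x \<in> {a'..b'}" for x unfolding M_def by (rule cSUP_upper[OF that bdd])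
  have M0: "0 \<le> M" using FM[of a'] F0[of a'] a'b' by auto
  have minP: "Min P \<le> p i" and maxP: "p i \<le> Max P" if "i < N" for i
    unfolding P_def using that by auto
  have aMin: "Min P \<le> a" and bMax: "b \<le> Max P" using a_ge b_le unfolding P_def by auto
  have D0: "0 \<le> D" unfolding D_def using aMin by auto
  have Dl: "a - p i \<le> D" if "i < N" for i using minP[OF that] unfolding D_def by auto
  have Dr: "p i - b \<le> D" if "i < N" for i using maxP[OF that] unfolding D_def by auto
  have eC: "e \<le> \<delta> * C" unfolding e_def C_def using \<delta>_range by (intro mult_left_mono, auto)
  have e0: "0 \<le> e" unfolding e_def using \<delta>_range by simp
  have C0: "0 \<le> C" unfolding C_def using D0 by simp
  have dC0: "0 \<le> \<delta> * C" using C0 \<delta>_range by simp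
  have tl: "- e \<le> t i \<and> t i \<le> 0" if "i < N" "p i < a" for i
    using T_left[OF \<delta>_range, of "p i" a D b] that Dl[of i] unfolding t_def e_def by auto
  have tr: "b - a \<le> t i \<and> t i \<le> (b - a) + e" if "i < N" "b < p i" for i
    using T_right[OF \<delta>_range, of b "p i" D a] that Dr[of i] ab unfolding t_def e_def by auto
  have tm: "t i = p i - a" if "a \<le> p i" "p i \<le> b" for i
    using that unfolding t_def by (simp add: T_mid)
  have gap: "\<bar>t i - t j\<bar> \<le> 2 * M + \<delta> * C"
    if ij: "i < N" "j < N" "p i < p j" and adjc: "\<forall>l<N. \<not> (p i < p l \<and> p l < p j)" for i j
  proof -
    have adj: "p l \<le> p i \<or> p j \<le> p l" if "l < N" for l using adjc that by force
    show ?thesis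
    proof (cases "p j < a")
      case True
      thus ?thesis using tl[of i] tl[of j] ij M0 eC by auto
    next
      case vge: False
      show ?thesis
      proof (cases "p i < a")
        case uless: True
        have "p j \<le> m0"
        proof (rule ccontr)
          assume "\<not> p j \<le> m0"
          thus False using adj[OF l0(2)] l0 uless am0 by auto
        qed
        hence vPD: "p j \<in> PD" using inPD[OF ij(2)] vge m01 m1b by auto
        hence vm0: "p j = m0" using m0le[OF vPD] \<open>p j \<le> m0\<close> by simp
        have "a' - a \<le> F a'"
        proof (rule Fge)
          fix l assume l: "l < N"
          show "a' - a \<le> \<bar>a' - p l\<bar>"
          proof (cases "p l \<le> p i")
            case True thus ?thesis using uless abs_ge_self[of "a' - p l"] a'_def am0 by auto
          next
            case False hence "p j \<le> p l" using adj[OF l] by auto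
            thus ?thesis using vm0 vge abs_ge_minus_self[of "a' - p l"] a'_def by auto
          qed
        qed
        hence "a' - a \<le> M" using FM[of a'] a'b' by auto
        hence "m0 - a \<le> 2 * M" unfolding a'_def by (simp add: field_simps)
        moreover have "t j = m0 - a" using tm[of j] vge vm0 m01 m1b by auto
        ultimately show ?thesis using tl[OF ij(1) uless] eC am0 by auto
      next
        case uge: False
        show ?thesis
        proof (cases "b < p i")
          case True
          thus ?thesis using tr[of i] tr[of j] ij M0 eC by auto
        next
          case ule: False
          have uPD: "p i \<in> PD" using inPD[OF ij(1)] uge ule by auto
          show ?thesis
          proof (cases "p j \<le> b")
            case vle: True
            have vPD: "p j \<in> PD" using inPD[OF ij(2)] vge vle by auto
            define x where "x = (p i + p j) / 2"
            have xin: "x \<in> {a'..b'}" using m0le[OF uPD] m1ge[OF vPD] a'm0 m1b' ij unfolding x_def by auto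
            have "(p j - p i) / 2 \<le> F x"
            proof (rule Fge)
              fix l assume l: "l < N"
              show "(p j - p i) / 2 \<le> \<bar>x - p l\<bar>" using adj[OF l] ij(3) x_def by auto
            qed
            hence "p j - p i \<le> 2 * M" using FM[OF xin] by auto
            thus ?thesis using tm[of i] tm[of j] uge ule vge vle ij dC0 by auto
          next
            case vgt: False
            have "m1 \<le> p i"
            proof (rule ccontr)
              assume "\<not> m1 \<le> p i"
              thus False using adj[OF l1(2)] l1 vgt m1b by auto
            qed
            hence um1: "p i = m1" using m1ge[OF uPD] by simp
            have "b - b' \<le> F b'"
            proof (rule Fge)
              fix l assume l: "l < N"
              show "b - b' \<le> \<bar>b' - p l\<bar>"
              proof (cases "p l \<le> p i")
                case True thus ?thesis using um1 ule abs_ge_self[of "b' - p l"] b'_def by auto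
              next
                case False hence "p j \<le> p l" using adj[OF l] by auto
                thus ?thesis using vgt um1 ule abs_ge_minus_self[of "b' - p l"] b'_def by auto
              qed
            qed
            hence "b - b' \<le> M" using FM[of b'] a'b' by auto
            hence "b - m1 \<le> 2 * M" unfolding b'_def by (simp add: field_simps)
            moreover have "t i = m1 - a" using tm[of i] uge ule um1 by auto
            ultimately show ?thesis using tr[of j] ij vgt eC m1b by auto
          qed
        qed
      qed
    qed
  qed
  have g0: "0 \<le> (2 * M + \<delta> * C) / \<sigma>" using M0 C0 \<delta>_range \<sigma>_pos by simp
  have K0: "0 \<le> K" unfolding K_def using k_pos g0 by (simp add: less_imp_le)
  have symA: "A i j = A j i" for i j unfolding A_def by (simp add: abs_minus_commute)
  have nnA: "0 \<le> A i j" for i j unfolding A_def using k_pos \<sigma>_pos by (simp add: less_imp_le)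
  have adjK: "K \<le> A i j" if "i < N" "j < N" "p i < p j" "\<forall>l<N. \<not> (p i < p l \<and> p l < p j)" for i j
  proof -
    have "\<bar>t i - t j\<bar> / \<sigma> \<le> (2 * M + \<delta> * C) / \<sigma>" using gap[OF that] \<sigma>_pos by (simp add: divide_right_mono)
    thus ?thesis unfolding K_def A_def using k_noninc \<sigma>_pos by auto
  qed
  have Q: "K / real N ^ 3 * (\<Sum>i<N. (w i)^2) \<le>
     (\<Sum>i<N. w i * (\<Sum>j<N. ((if i = j then (\<Sum>l<N. A i l) else 0) - A i j) * w j))"
    if "(\<Sum>i<N. w i) = 0" for w
    by (rule PATH[of N A p K w], insert N2 symA nnA p_inj K0 adjK that, auto)
  have "K / real N ^ 3 \<le> lambda2 (std_laplacian N A)"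
    by (rule LA[OF N2], rule symA, rule Q)
  hence main: "1 / (real (card P))^3 * K \<le> lambda2 (std_laplacian N A)" using cardP by simp
  show ?thesis
    unfolding Let_def
    using main
    unfolding P_def[symmetric] PD_def[symmetric] m0_def[symmetric] m1_def[symmetric] a'_def[symmetric] b'_def[symmetric]
    F_def[symmetric] M_def[symmetric] D_def[symmetric] C_def[symmetric] K_def A_def t_def
    by simp
qed


end
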